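(* Let $n\ge 3$ and let $f(x)=\sum_{i=0}^n a_ix^i$ be a complex polynomial with $a_n\ne 0$, written as $f(x)=a_n(x+x_1)\cdots(x+x_n)$ with $x_1,\dots,x_n\in\mathbb{C}$. For each of the $n!$ permutations $\sigma_s$ ($s=1,\dots,n!$) of the positions $\{1,\dots,n\}$, let $x_{is}=x_{\sigma_s(i)}$ and define $b_{1s},\dots,b_{(n-1)s}$ by $x_{is}=x_{(i-1)s}+\sum_{j=1}^{i-1}b_{js}$ for $i=2,\dots,n$. Let $D_n=(n-1)!^2a_{n-1}^2-2\,n!\,(n-2)!\,a_na_{n-2}$. Then $$\frac{D_n}{a_n^2}=-\frac{1}{3}(n-1)!\sum_{s=1}^{n!}b_{1s}b_{2s};$$ and if $n\ge 4$, then for every $i=0,\dots,n-4$, $$\frac{D_n}{a_n^2}=(n-1)!\sum_{s=1}^{n!}b_{(1+i)s}b_{(3+i)s},\qquad \frac{D_n}{a_n^2}=-\frac{1}{4}(n-1)!\sum_{s=1}^{n!}b_{(2+i)s}b_{(3+i)s}.$$ Moreover, for all indices $1\le j<k\le n-1$ with $(j,k)$ not of the form $(1,2)$, $(1+i,3+i)$ or $(2+i,3+i)$ with $0\le i\le n-4$, one has $\sum_{s=1}^{n!}b_{js}b_{ks}=0$.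
   Context: The defining relations are equivalent to $b_{1s}=x_{2s}-x_{1s}$ and $b_{js}=x_{(j+1)s}-2x_{js}+x_{(j-1)s}$ for $2\le j\le n-1$. *)

theory Defs
  imports "HOL-Computational_Algebra.Polynomial" "HOL-Combinatorics.Permutations"
begin

text \<open>The numbers b_j for a sequence y_1,...,y_n (indices from 1), determined by
  y_i = y_(i-1) + sum_(j=1)^(i-1) b_j for i = 2..n; equivalently
  b_1 = y_2 - y_1 and b_j = y_(j+1) - 2 y_j + y_(j-1) for 2 <= j <= n-1.\<close>
definition bseq :: "(nat \<Rightarrow> complex) \<Rightarrow> nat \<Rightarrow> complex" where
  "bseq y j = (if j = 1 then y 2 - y 1 else y (j+1) - 2 * y j + y (j-1))"

definition Sb :: "nat \<Rightarrow> (nat \<Rightarrow> complex) \<Rightarrow> nat \<Rightarrow> nat \<Rightarrow> complex" where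
  "Sb n x j k = (\<Sum>\<sigma> | \<sigma> permutes {1..n}. bseq (x \<circ> \<sigma>) j * bseq (x \<circ> \<sigma>) k)"

definition Dn :: "nat \<Rightarrow> complex poly \<Rightarrow> complex" where
  "Dn n f = (fact (n-1))^2 * (coeff f (n-1))^2
            - 2 * fact n * fact (n-2) * coeff f n * coeff f (n-2)"

end

theory Submission
  imports Defs
begin


definition MM :: "nat \<Rightarrow> (nat \<Rightarrow> complex) \<Rightarrow> nat \<Rightarrow> nat \<Rightarrow> complex" where
  "MM n x p q = (\<Sum>\<sigma> | \<sigma> permutes {1..n}. x (\<sigma> p) * x (\<sigma> q))"

lemma MM_sym:
  assumes "\<tau> permutes {1..n}" "\<tau> p' = p" "\<tau> q' = q"
  shows "MM n x p q = MM n x p' q'"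
  unfolding MM_def
  by (subst sum_permutations_compose_right[OF assms(1)]) (simp add: assms)

lemma MM_diag:
  assumes "p \<in> {1..n}" "p' \<in> {1..n}"
  shows "MM n x p p = MM n x p' p'"
  by (rule MM_sym[of "Transposition.transpose p' p"]) (use assms in \<open>auto intro: permutes_swap_id\<close>)

lemma MM_off:
  assumes "p \<in> {1..n}" "p' \<in> {1..n}" "q \<in> {1..n}" "q' \<in> {1..n}" "p \<noteq> q" "p' \<noteq> q'"
  shows "MM n x p q = MM n x p' q'"
proof -
  define t1 where "t1 = Transposition.transpose p' p"
  define q'' where "q'' = t1 q'"
  define t2 where "t2 = Transposition.transpose q'' q"
  have t1p: "t1 permutes {1..n}" unfolding t1_def using assms by (auto intro: permutes_swap_id)
  have q''in: "q'' \<in> {1..n}" using permutes_in_image[OF t1p] assms(4) unfolding q''_def by blast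
  have t2p: "t2 permutes {1..n}" unfolding t2_def using assms q''in by (auto intro: permutes_swap_id)
  have q''p: "q'' \<noteq> p" unfolding q''_def t1_def using assms by (auto simp: Transposition.transpose_def)
  show ?thesis
    apply (rule MM_sym[of "t2 \<circ> t1"])
      apply (rule permutes_compose[OF t1p t2p])
    using assms q''p unfolding t2_def q''_def t1_def
    by (auto simp: Transposition.transpose_def)
qed

lemma sum_perm_inv:
  assumes "\<sigma> permutes S" shows "(\<Sum>p\<in>S. g (\<sigma> p)) = (\<Sum>i\<in>S. g i)"
  using sum.reindex_bij_betw[OF permutes_imp_bij[OF assms], of g] .

lemma alg_aux:
  fixes nn k m11 m12 F G e q :: complex
  assumes "nn * (m11 + k*m12) = F*e" "nn*m11 = F*q" "F = nn*(k*G)" "nn \<noteq> 0" "k \<noteq> 0"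
  shows "m12 = G*(e - q)"
proof -
  have "nn * (k * m12) = nn * (k * (G * (e - q)))" using assms(1-3) by algebra
  thus ?thesis using assms(4,5) by simp
qed

lemma MM_values:
  assumes n: "n \<ge> 2"
  shows "MM n x 1 1 = fact (n-1) * (\<Sum>i\<in>{1..n}. (x i)^2)"
    and "MM n x 1 2 = fact (n-2) * ((\<Sum>i\<in>{1..n}. x i)^2 - (\<Sum>i\<in>{1..n}. (x i)^2))"
proof -
  let ?S = "{1..n::nat}"
  let ?P = "{\<sigma>. \<sigma> permutes ?S}"
  let ?e = "\<Sum>i\<in>?S. x i" and ?q = "\<Sum>i\<in>?S. (x i)^2"
  have fP: "finite ?P" by (rule finite_permutations) simp
  have cP: "card ?P = fact n" by (rule card_permutations) auto
  have d1: "(\<Sum>p\<in>?S. MM n x p p) = fact n * ?q"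
  proof -
    have "(\<Sum>p\<in>?S. MM n x p p) = (\<Sum>\<sigma>\<in>?P. \<Sum>p\<in>?S. (x (\<sigma> p))^2)"
      unfolding MM_def by (subst sum.swap) (simp add: power2_eq_square)
    also have "\<dots> = (\<Sum>\<sigma>\<in>?P. ?q)"
      by (rule sum.cong) (auto intro: sum_perm_inv[where g = "\<lambda>i. (x i)^2"])
    finally show ?thesis using cP by simp
  qed
  have d2: "(\<Sum>p\<in>?S. \<Sum>q\<in>?S. MM n x p q) = fact n * ?e^2"
  proof -
    have "(\<Sum>p\<in>?S. \<Sum>q\<in>?S. MM n x p q) = (\<Sum>\<sigma>\<in>?P. (\<Sum>p\<in>?S. x (\<sigma> p)) * (\<Sum>q\<in>?S. x (\<sigma> q)))"
      unfolding MM_def sum_product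
    proof -
      have "(\<Sum>p\<in>?S. \<Sum>q\<in>?S. \<Sum>\<sigma>\<in>?P. x (\<sigma> p) * x (\<sigma> q)) = (\<Sum>p\<in>?S. \<Sum>\<sigma>\<in>?P. \<Sum>q\<in>?S. x (\<sigma> p) * x (\<sigma> q))"
        by (intro sum.cong refl sum.swap)
      also have "\<dots> = (\<Sum>\<sigma>\<in>?P. \<Sum>p\<in>?S. \<Sum>q\<in>?S. x (\<sigma> p) * x (\<sigma> q))"
        by (rule sum.swap)
      finally show "(\<Sum>p\<in>?S. \<Sum>q\<in>?S. \<Sum>\<sigma>\<in>?P. x (\<sigma> p) * x (\<sigma> q)) = (\<Sum>\<sigma>\<in>?P. \<Sum>p\<in>?S. \<Sum>q\<in>?S. x (\<sigma> p) * x (\<sigma> q))" .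
    qed
    also have "\<dots> = (\<Sum>\<sigma>\<in>?P. ?e * ?e)"
      by (rule sum.cong) (auto simp: sum_perm_inv[where g = x])
    finally show ?thesis using cP by (simp add: power2_eq_square)
  qed
  have in1: "1 \<in> ?S" and in2: "2 \<in> ?S" using n by auto
  have dd: "MM n x p p = MM n x 1 1" if "p \<in> ?S" for p using MM_diag[OF that in1] .
  have od: "MM n x p q = MM n x 1 2" if "p \<in> ?S" "q \<in> ?S" "p \<noteq> q" for p q
    using MM_off[OF that(1) in1 that(2) in2 that(3)] by simp
  have "(\<Sum>p\<in>?S. MM n x p p) = (\<Sum>p\<in>?S. MM n x 1 1)"
    by (rule sum.cong[OF refl], rule dd) simp
  hence A: "n * MM n x 1 1 = fact n * ?q" using d1 by simp
  have row: "(\<Sum>q\<in>?S. MM n x p q) = MM n x 1 1 + of_nat (n-1) * MM n x 1 2" if "p \<in> ?S" for p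
  proof -
    have "(\<Sum>q\<in>?S. MM n x p q) = MM n x p p + (\<Sum>q\<in>?S-{p}. MM n x p q)"
      using that by (simp add: sum.remove)
    also have "(\<Sum>q\<in>?S-{p}. MM n x p q) = (\<Sum>q\<in>?S-{p}. MM n x 1 2)"
      by (rule sum.cong[OF refl], rule od) (use that in auto)
    finally show ?thesis using that dd[OF that] by simp
  qed
  have "(\<Sum>p\<in>?S. \<Sum>q\<in>?S. MM n x p q) = (\<Sum>p\<in>?S. MM n x 1 1 + of_nat (n-1) * MM n x 1 2)"
    by (rule sum.cong[OF refl], rule row) simp
  hence B: "n * (MM n x 1 1 + of_nat (n-1) * MM n x 1 2) = fact n * ?e^2"
    using d2 n by (simp add: of_nat_diff)
  obtain N where N: "n = Suc (Suc N)" using n by (metis add_2_eq_Suc le_Suc_ex)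
  have fn1: "(fact n :: complex) = of_nat n * (fact (n-1) :: complex)"
    using N by (simp add: fact_Suc)
  have fn2: "(fact (n-1) :: complex) = of_nat (n-1) * (fact (n-2) :: complex)"
    using N by (simp add: fact_Suc)
  have nz: "(n::complex) \<noteq> 0" using n by simp
  have nz1: "(of_nat (n-1)::complex) \<noteq> 0" using n by simp
  show M1: "MM n x 1 1 = fact (n-1) * ?q" using A nz by (simp add: fn1)
  show "MM n x 1 2 = fact (n-2) * (?e^2 - ?q)"
    by (rule alg_aux[OF B A _ nz nz1]) (simp only: fn1 fn2)
qed



definition PP :: "(nat \<Rightarrow> complex) \<Rightarrow> nat \<Rightarrow> complex poly" where
  "PP x m = (\<Prod>i\<in>{1..m}. [:x i, 1:])"

lemma PP_0: "PP x 0 = 1" by (simp add: PP_def)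
lemma PP_Suc: "PP x (Suc m) = PP x m * [:x (Suc m), 1:]" by (simp add: PP_def)

lemma coeff_lin_Suc: "coeff (p * [:a, 1::complex:]) (Suc k) = coeff p k + a * coeff p (Suc k)"
  by (simp add: mult_pCons_right add.commute)
lemma coeff_lin_0: "coeff (p * [:a, 1:]) 0 = a * coeff p 0"
  by (simp add: mult_pCons_right)

lemma PP_high: "k > m \<Longrightarrow> coeff (PP x m) k = 0"
proof (induction m arbitrary: k)
  case 0 thus ?case by (simp add: PP_0 coeff_1)
next
  case (Suc m)
  then obtain k' where k: "k = Suc k'" by (cases k) auto
  show ?case using Suc k by (simp add: PP_Suc coeff_lin_Suc)
qed

lemma PP_top: "coeff (PP x m) m = 1"
proof (induction m)
  case 0 thus ?case by (simp add: PP_0)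
next
  case (Suc m) thus ?case by (simp add: PP_Suc coeff_lin_Suc PP_high)
qed

lemma PP_e1: "coeff (PP x (Suc m)) m = (\<Sum>i\<in>{1..Suc m}. x i)"
proof (induction m)
  case 0 thus ?case by (simp add: PP_Suc PP_0 coeff_lin_0)
next
  case (Suc m)
  have "coeff (PP x (Suc (Suc m))) (Suc m) = coeff (PP x (Suc m)) m + x (Suc (Suc m))"
    by (simp only: PP_Suc[of x "Suc m"] coeff_lin_Suc PP_top) simp
  thus ?case using Suc by simp
qed

lemma PP_e2: "2 * coeff (PP x (Suc (Suc m))) m =
   (\<Sum>i\<in>{1..Suc (Suc m)}. x i)^2 - (\<Sum>i\<in>{1..Suc (Suc m)}. (x i)^2)"
proof (induction m)
  case 0 thus ?case by (simp add: PP_Suc PP_0 coeff_lin_0 power2_eq_square algebra_simps)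
next
  case (Suc m)
  have "coeff (PP x (Suc (Suc (Suc m)))) (Suc m) = coeff (PP x (Suc (Suc m))) m
     + x (Suc (Suc (Suc m))) * (\<Sum>i\<in>{1..Suc (Suc m)}. x i)"
    by (simp only: PP_Suc[of x "Suc (Suc m)"] coeff_lin_Suc PP_e1)
  thus ?case using Suc by (simp add: power2_eq_square algebra_simps)
qed



lemma bseq_lin1: "bseq (x \<circ> \<sigma>) 1 = (-1)*x(\<sigma> 1) + 1*x(\<sigma> 2) + 0*x(\<sigma> 1)"
  by (simp add: bseq_def)
lemma bseq_lin2: "j \<noteq> 1 \<Longrightarrow> bseq (x \<circ> \<sigma>) j = 1*x(\<sigma> (j-1)) + (-2)*x(\<sigma> j) + 1*x(\<sigma> (j+1))"
  by (simp add: bseq_def)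

lemma Sb_expand:
  assumes "\<And>\<sigma>. bseq (x \<circ> \<sigma>) j = a1*x(\<sigma> p1) + a2*x(\<sigma> p2) + a3*x(\<sigma> p3)"
      and "\<And>\<sigma>. bseq (x \<circ> \<sigma>) k = b1*x(\<sigma> q1) + b2*x(\<sigma> q2) + b3*x(\<sigma> q3)"
  shows "Sb n x j k =
     a1*b1*MM n x p1 q1 + a1*b2*MM n x p1 q2 + a1*b3*MM n x p1 q3 +
     a2*b1*MM n x p2 q1 + a2*b2*MM n x p2 q2 + a2*b3*MM n x p2 q3 +
     a3*b1*MM n x p3 q1 + a3*b2*MM n x p3 q2 + a3*b3*MM n x p3 q3"
  unfolding Sb_def assms MM_def
  by (simp add: algebra_simps sum.distrib sum_distrib_left)


theorem mainTheorem2: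
  fixes f :: "complex poly" and n :: nat and x :: "nat \<Rightarrow> complex"
  assumes "n \<ge> 3"
    and "coeff f n \<noteq> 0"
    and "f = smult (coeff f n) (\<Prod>i\<in>{1..n}. [:x i, 1:])"
  shows "Dn n f / (coeff f n)^2 = - (1/3) * fact (n-1) * Sb n x 1 2
    \<and> (\<forall>i. i + 4 \<le> n \<longrightarrow>
           Dn n f / (coeff f n)^2 = fact (n-1) * Sb n x (1+i) (3+i) \<and>
           Dn n f / (coeff f n)^2 = - (1/4) * fact (n-1) * Sb n x (2+i) (3+i))
    \<and> (\<forall>j k. 1 \<le> j \<and> j < k \<and> k \<le> n - 1 \<and> (j, k) \<noteq> (1, 2) \<and>
           \<not> (\<exists>i. i + 4 \<le> n \<and> ((j, k) = (1+i, 3+i) \<or> (j, k) = (2+i, 3+i)))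
           \<longrightarrow> Sb n x j k = 0)"
proof -
  obtain N where N: "n = Suc (Suc N)" using assms(1) by (metis add_2_eq_Suc le_Suc_ex le_trans numeral_le_iff semiring_norm(72) numerals(1) one_le_numeral)
  define a where "a = coeff f n"
  define e where "e = (\<Sum>i\<in>{1..n}. x i)"
  define q where "q = (\<Sum>i\<in>{1..n}. (x i)^2)"
  define A where "A = MM n x 1 1"
  define B where "B = MM n x 1 2"
  define K where "K = A - B"
  have a0: "a \<noteq> 0" using assms(2) a_def by simp
  have fP: "f = smult a (PP x n)" using assms(3) unfolding a_def PP_def .
  have c1: "coeff f (n-1) = a * e" unfolding fP e_def using PP_e1[of x "Suc N"] N by simp
  have c2: "2 * coeff f (n-2) = a * (e^2 - q)" unfolding fP e_def q_def using PP_e2[of x N] N by simp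
  have c0: "coeff f n = a" using a_def by simp
  have A1: "A = fact (n-1) * q" unfolding A_def q_def by (rule MM_values(1)) (use N in simp)
  have B1: "B = fact (n-2) * (e^2 - q)" unfolding B_def q_def e_def by (rule MM_values(2)) (use N in simp)
  have fn: "(fact n :: complex) = of_nat (Suc (Suc N)) * (of_nat (Suc N) * fact N)"
    "(fact (n-1) :: complex) = of_nat (Suc N) * fact N" "(fact (n-2) :: complex) = fact N"
    using N by (simp_all add: fact_Suc)
  have D: "Dn n f / a^2 = fact (n-1) * K"
  proof -
    have "Dn n f = (fact (n-1))^2 * (a*e)^2 - fact n * fact (n-2) * a * (a * (e^2 - q))"
      unfolding Dn_def c1 c0 c2[symmetric] by (simp add: algebra_simps)
    also have "\<dots> = a^2 * (fact (n-1) * K)"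
      unfolding K_def A1 B1 fn by (simp add: algebra_simps power2_eq_square)
    finally show ?thesis using a0 by simp
  qed
  have Mv: "MM n x p r = (if p = r then A else B)" if "p \<in> {1..n}" "r \<in> {1..n}" for p r
  proof (cases "p = r")
    case True thus ?thesis unfolding A_def using MM_diag[OF that(1), of 1 x] N that by simp
  next
    case False thus ?thesis unfolding B_def using MM_off[OF that(1) _ that(2) _ False, of 1 2 x] N by simp
  qed
  have S12: "Sb n x 1 2 = -3 * K"
    by (subst Sb_expand[OF bseq_lin1 bseq_lin2]) (use assms(1) in \<open>simp_all add: Mv K_def\<close>)
  have S13: "Sb n x (1+i) (3+i) = K" if "i + 4 \<le> n" for i
  proof (cases i)
    case 0
    have "Sb n x 1 3 = K"
      by (subst Sb_expand[OF bseq_lin1 bseq_lin2]) (use that in \<open>simp_all add: Mv K_def\<close>)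
    thus ?thesis using 0 by simp
  next
    case (Suc i') thus ?thesis
      by (subst Sb_expand[OF bseq_lin2 bseq_lin2]) (use that in \<open>simp_all add: Mv K_def\<close>)
  qed
  have S23: "Sb n x (2+i) (3+i) = -4 * K" if "i + 4 \<le> n" for i
    by (subst Sb_expand[OF bseq_lin2 bseq_lin2]) (use that in \<open>simp_all add: Mv K_def\<close>)
  have S0: "Sb n x j k = 0" if hjk: "1 \<le> j" "j + 3 \<le> k" "k \<le> n - 1" for j k
  proof (cases "j = 1")
    case True
    have kn: "k + 1 \<le> n" "4 \<le> k" using hjk True by auto
    obtain k' where k': "k = Suc k'" using kn by (cases k) auto
    have kn': "k' + 2 \<le> n" "3 \<le> k'" using kn k' by auto
    have "Sb n x 1 k = 0" unfolding k'
      by (subst Sb_expand[OF bseq_lin1 bseq_lin2]) (use kn' in \<open>simp_all add: Mv K_def\<close>)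
    thus ?thesis using True by simp
  next
    case False
    obtain j' where j': "j = Suc j'" using hjk by (cases j) auto
    obtain k' where k': "k = Suc k'" using hjk by (cases k) auto
    have h': "1 \<le> j'" "j' + 3 \<le> k'" "k' + 2 \<le> n" using hjk False j' k' by auto
    show ?thesis unfolding j' k'
      by (subst Sb_expand[OF bseq_lin2 bseq_lin2]) (use h' in \<open>simp_all add: Mv K_def\<close>)
  qed
  show ?thesis
  proof (intro conjI allI impI)
    show "Dn n f / (coeff f n)^2 = - (1/3) * fact (n-1) * Sb n x 1 2"
      using D S12 by (simp add: a_def)
  next
    fix i assume "i + 4 \<le> n"
    thus "Dn n f / (coeff f n)^2 = fact (n-1) * Sb n x (1+i) (3+i)"
      "Dn n f / (coeff f n)^2 = - (1/4) * fact (n-1) * Sb n x (2+i) (3+i)"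
      using D S13 S23 by (simp_all add: a_def)
  next
    fix j k
    assume h: "1 \<le> j \<and> j < k \<and> k \<le> n - 1 \<and> (j, k) \<noteq> (1, 2) \<and>
           \<not> (\<exists>i. i + 4 \<le> n \<and> ((j, k) = (1+i, 3+i) \<or> (j, k) = (2+i, 3+i)))"
    have "k \<noteq> j + 1"
    proof
      assume k: "k = j + 1"
      show False
      proof (cases "j = 1")
        case True thus False using h k by simp
      next
        case False
        hence "(j, k) = (2 + (j-2), 3 + (j-2))" "(j-2) + 4 \<le> n" using h k by auto
        thus False using h by blast
      qed
    qed
    moreover have "k \<noteq> j + 2"
    proof
      assume k: "k = j + 2"
      hence "(j, k) = (1 + (j-1), 3 + (j-1))" "(j-1) + 4 \<le> n" using h by auto
      thus False using h by blast
    qed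
    ultimately show "Sb n x j k = 0" using h by (intro S0) auto
  qed
qed

end
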